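(* Let $(A,\dagger)$ be a commutative unital $\mathbb{K}$-algebra with involution, and extend $\dagger$ to $T^+(A)$ letterwise, $(a_1\otimes\cdots\otimes a_n)^\dagger=a_1^\dagger\otimes\cdots\otimes a_n^\dagger$. On $T^+(A)$ define $$X\prec Y:=X\,\bar\bullet^\ell\,P_A(Y),\qquad X\succ Y:=P_A(X)\,\bar\bullet^\ell\,Y,\qquad X\bullet Y:=-X\,\bar\bullet^\ell\,P_A(1_A)\,\bar\bullet^\ell\,Y .$$ Then $(T^+(A),\prec,\succ,\bullet)$ is a commutative tridendriform algebra, and $(X\prec Y)^\dagger=X^\dagger\prec Y^\dagger$ and $(X\bullet Y)^\dagger=X^\dagger\bullet Y^\dagger$ for all $X,Y\in T^+(A)$.
   Context: $\mathbb{K}$ is a field of characteristic $0$; $A$ has product $[a;b]$ and unit $1_A$; an involution is a linear $\dagger$ with $\dagger^2=\mathrm{id}$ and $[a;b]^\dagger=[b^\dagger;a^\dagger]$. $T(A)=\bigoplus_{n\ge0}A^{\otimes n}$, $A^{\otimes0}=\mathbb{K}1_{\mathbb{K}}$, $a\otimes1_{\mathbb{K}}$ identified with $a$. The left-shift shuffle $\bullet^\ell$ is the bilinear product on $T(A)$ with $k1_{\mathbb{K}}\bullet^\ell U=kU=U\bullet^\ell k1_{\mathbb{K}}$ and $(a\otimes U)\bullet^\ell(b\otimes V)=a\otimes(U\bullet^\ell(b\otimes V))+b\otimes((a\otimes U)\bullet^\ell V)-[a;b]\otimes1_A\otimes(U\bullet^\ell V)$ for $a,b\in A$. $T^+(A)=A\otimes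 T(A)$ with $(a\otimes U)\bar\bullet^\ell(b\otimes V)=[a;b]\otimes(U\bullet^\ell V)$, unit $1_A=1_A\otimes1_{\mathbb{K}}$; $P_A(a_1\otimes\cdots\otimes a_n)=1_A\otimes a_1\otimes\cdots\otimes a_n$, so $P_A(1_A)=1_A\otimes1_A$. A tridendriform algebra is a vector space with bilinear $\prec,\succ,\bullet$ such that, with $x\star y:=x\prec y+x\succ y+x\bullet y$: $(x\prec y)\prec z=x\prec(y\star z)$, $(x\succ y)\prec z=x\succ(y\prec z)$, $(x\star y)\succ z=x\succ(y\succ z)$, $(x\succ y)\bullet z=x\succ(y\bullet z)$, $(x\prec y)\bullet z=x\bullet(y\succ z)$, $(x\bullet y)\prec z=x\bullet(y\prec z)$, $(x\bullet y)\bullet z=x\bullet(y\bullet z)$. It is commutative if $x\prec y=y\succ x$ and $x\bullet y=y\bullet x$. *)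

theory Defs
  imports Main "HOL.Modules"
begin

text \<open>Model of the tensor algebra T(A) over a field 'k, for a commutative unital
  'k-algebra A (carrier type 'a, ring structure of 'a, scalar action scale).
  An element of the free 'k-vector space on words of A is a finitely supported
  coefficient function  'a list \<Rightarrow> 'k ; the word a1...an stands for a1 (x) ... (x) an
  and the empty word stands for 1_K.  T(A) is this free space modulo the subspace
  tnull generated by the multilinearity relations; identities in T(A) are
  therefore stated as  X - Y \<in> tnull.\<close>

definition fsupp :: "('a list \<Rightarrow> 'k::zero) \<Rightarrow> bool" where
  "fsupp X \<longleftrightarrow> finite {w. X w \<noteq> 0}"

text \<open>elements of T^+(A) = A (x) T(A): no component on the empty word\<close>
definition tplus :: "('a list \<Rightarrow> 'k::zero) \<Rightarrow> bool" where
  "tplus X \<longleftrightarrow> fsupp X \<and> X [] = 0"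

definition wsingle :: "'a list \<Rightarrow> ('a list \<Rightarrow> 'k::{zero,one})" where
  "wsingle u = (\<lambda>w. if w = u then 1 else 0)"

definition tpre :: "'a \<Rightarrow> ('a list \<Rightarrow> 'k::zero) \<Rightarrow> ('a list \<Rightarrow> 'k)" where
  "tpre a F = (\<lambda>w. case w of [] \<Rightarrow> 0 | x # w' \<Rightarrow> if x = a then F w' else 0)"

fun lsh :: "'a::comm_ring_1 list \<Rightarrow> 'a list \<Rightarrow> ('a list \<Rightarrow> 'k::comm_ring_1)" where
  "lsh [] V = wsingle V"
| "lsh (a # U) [] = wsingle (a # U)"
| "lsh (a # U) (b # V) =
     (\<lambda>w. tpre a (lsh U (b # V)) w + tpre b (lsh (a # U) V) w
          - tpre (a * b) (tpre 1 (lsh U V)) w)"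

definition bilext :: "('a list \<Rightarrow> 'a list \<Rightarrow> ('a list \<Rightarrow> 'k::comm_ring_1))
    \<Rightarrow> ('a list \<Rightarrow> 'k) \<Rightarrow> ('a list \<Rightarrow> 'k) \<Rightarrow> ('a list \<Rightarrow> 'k)" where
  "bilext f X Y = (\<lambda>w. \<Sum>u\<in>{u. X u \<noteq> 0}. \<Sum>v\<in>{v. Y v \<noteq> 0}. X u * Y v * f u v w)"

definition shuf :: "('a::comm_ring_1 list \<Rightarrow> 'k::comm_ring_1) \<Rightarrow> ('a list \<Rightarrow> 'k) \<Rightarrow> ('a list \<Rightarrow> 'k)" where
  "shuf = bilext lsh"

fun barw :: "'a::comm_ring_1 list \<Rightarrow> 'a list \<Rightarrow> ('a list \<Rightarrow> 'k::comm_ring_1)" where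
  "barw (a # U) (b # V) = tpre (a * b) (lsh U V)"
| "barw _ _ = (\<lambda>w. 0)"

definition bar :: "('a::comm_ring_1 list \<Rightarrow> 'k::comm_ring_1) \<Rightarrow> ('a list \<Rightarrow> 'k) \<Rightarrow> ('a list \<Rightarrow> 'k)" where
  "bar = bilext barw"

definition PA :: "('a::comm_ring_1 list \<Rightarrow> 'k::zero) \<Rightarrow> ('a list \<Rightarrow> 'k)" where
  "PA X = tpre 1 X"

definition tprec :: "('a::comm_ring_1 list \<Rightarrow> 'k::comm_ring_1) \<Rightarrow> ('a list \<Rightarrow> 'k) \<Rightarrow> ('a list \<Rightarrow> 'k)" where
  "tprec X Y = bar X (PA Y)"

definition tsucc :: "('a::comm_ring_1 list \<Rightarrow> 'k::comm_ring_1) \<Rightarrow> ('a list \<Rightarrow> 'k) \<Rightarrow> ('a list \<Rightarrow> 'k)" where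
  "tsucc X Y = bar (PA X) Y"

text \<open>X \<bullet> Y = - X bar P_A(1_A) bar Y, where P_A(1_A) = 1_A (x) 1_A\<close>
definition tbul :: "('a::comm_ring_1 list \<Rightarrow> 'k::comm_ring_1) \<Rightarrow> ('a list \<Rightarrow> 'k) \<Rightarrow> ('a list \<Rightarrow> 'k)" where
  "tbul X Y = (\<lambda>w. - bar (bar X (PA (wsingle [1]))) Y w)"

definition tstar :: "('a::comm_ring_1 list \<Rightarrow> 'k::comm_ring_1) \<Rightarrow> ('a list \<Rightarrow> 'k) \<Rightarrow> ('a list \<Rightarrow> 'k)" where
  "tstar X Y = (\<lambda>w. tprec X Y w + tsucc X Y w + tbul X Y w)"

definition tdag :: "('a \<Rightarrow> 'a) \<Rightarrow> ('a list \<Rightarrow> 'k) \<Rightarrow> ('a list \<Rightarrow> 'k)" where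
  "tdag d X = (\<lambda>w. X (map d w))"

inductive_set tnull :: "('k::comm_ring_1 \<Rightarrow> 'a::ab_group_add \<Rightarrow> 'a) \<Rightarrow> ('a list \<Rightarrow> 'k) set"
  for scale where
  zero: "(\<lambda>w. 0) \<in> tnull scale"
| add_rel: "(\<lambda>w. wsingle (u @ (a + b) # v) w - wsingle (u @ a # v) w - wsingle (u @ b # v) w)
              \<in> tnull scale"
| scale_rel: "(\<lambda>w. wsingle (u @ scale c a # v) w - c * wsingle (u @ a # v) w) \<in> tnull scale"
| plus: "X \<in> tnull scale \<Longrightarrow> Y \<in> tnull scale \<Longrightarrow> (\<lambda>w. X w + Y w) \<in> tnull scale"
| smult: "X \<in> tnull scale \<Longrightarrow> (\<lambda>w. c * X w) \<in> tnull scale"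

definition teq :: "('k::comm_ring_1 \<Rightarrow> 'a::ab_group_add \<Rightarrow> 'a) \<Rightarrow> ('a list \<Rightarrow> 'k) \<Rightarrow> ('a list \<Rightarrow> 'k) \<Rightarrow> bool" where
  "teq scale X Y \<longleftrightarrow> (\<lambda>w. X w - Y w) \<in> tnull scale"

end

theory Submission
  imports Defs
begin



definition supp :: "('a list \<Rightarrow> 'k::zero) \<Rightarrow> 'a list set" where
  "supp F = {w. F w \<noteq> 0}"

definition lin :: "('a list \<Rightarrow> ('b \<Rightarrow> 'k::comm_ring_1)) \<Rightarrow> ('a list \<Rightarrow> 'k) \<Rightarrow> ('b \<Rightarrow> 'k)" where
  "lin K F = (\<lambda>w. \<Sum>u\<in>supp F. F u * K u w)"

lemma fsupp_supp: "fsupp F \<longleftrightarrow> finite (supp F)"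
  by (simp add: fsupp_def supp_def)

lemma lin_fin:
  assumes "finite S" "supp F \<subseteq> S"
  shows "lin K F w = (\<Sum>u\<in>S. F u * K u w)"
  unfolding lin_def
  by (rule sum.mono_neutral_left) (use assms in \<open>auto simp: supp_def\<close>)

lemma bilext_lin: "bilext f X Y = lin (\<lambda>u. lin (f u) Y) X"
  unfolding bilext_def lin_def supp_def
  by (rule ext) (simp add: sum_distrib_left mult.assoc)

lemma supp_single[simp]: "supp (wsingle u :: _ \<Rightarrow> 'k::{zero_neq_one}) = {u}"
  by (auto simp: supp_def wsingle_def)

lemma fsupp_single[simp]: "fsupp (wsingle u :: _ \<Rightarrow> 'k::{zero_neq_one})"
  by (simp add: fsupp_supp)

lemma lin_single[simp]: "lin K (wsingle u) = K u"
  by (rule ext) (simp add: lin_def, simp add: wsingle_def)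

lemma lin_wsingle: "fsupp F \<Longrightarrow> lin wsingle F = F"
  unfolding lin_def fsupp_supp
  apply (rule ext)
  subgoal for w
    by (cases "w \<in> supp F") (auto simp: wsingle_def supp_def if_distrib cong: if_cong)
  done

lemma lin_cong: "(\<And>u. u \<in> supp F \<Longrightarrow> K u = K' u) \<Longrightarrow> lin K F = lin K' F"
  unfolding lin_def by (rule ext) (rule sum.cong, auto)

lemma lin_kadd: "lin (\<lambda>u w. K1 u w + K2 u w) F = (\<lambda>w. lin K1 F w + lin K2 F w)"
  unfolding lin_def by (simp add: sum.distrib distrib_left)
lemma lin_kdiff: "lin (\<lambda>u w. K1 u w - K2 u w) F = (\<lambda>w. lin K1 F w - lin K2 F w)"
  unfolding lin_def by (simp add: sum_subtractf right_diff_distrib)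
lemma lin_kneg: "lin (\<lambda>u w. - K1 u w) F = (\<lambda>w. - lin K1 F w)"
  unfolding lin_def by (simp add: sum_negf)
lemma lin_kzero: "lin (\<lambda>u w. 0) F = (\<lambda>w. 0)"
  unfolding lin_def by simp

lemma supp_lin: "supp (lin K F) \<subseteq> (\<Union>u\<in>supp F. supp (K u))"
  unfolding lin_def supp_def
  by (auto elim!: sum.not_neutral_contains_not_neutral)


lemma fsupp_lin: "fsupp F \<Longrightarrow> (\<And>u. u \<in> supp F \<Longrightarrow> fsupp (K u)) \<Longrightarrow> fsupp (lin K F)"
  unfolding fsupp_supp using supp_lin by (metis (no_types, lifting) finite_UN_I finite_subset)

lemma lin_comp:
  assumes F: "fsupp F" and L: "\<And>u. u \<in> supp F \<Longrightarrow> fsupp (L u)"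
  shows "lin K (lin L F) = lin (\<lambda>u. lin K (L u)) F"
proof (rule ext)
  fix w
  define S where "S = (\<Union>u\<in>supp F. supp (L u))"
  have fS: "finite S" using F L by (auto simp: S_def fsupp_supp)
  have "lin K (lin L F) w = (\<Sum>s\<in>S. lin L F s * K s w)"
    using supp_lin[of L F] fS by (simp add: lin_fin S_def)
  also have "\<dots> = (\<Sum>s\<in>S. \<Sum>u\<in>supp F. F u * L u s * K s w)"
    by (simp add: lin_def sum_distrib_right)
  also have "\<dots> = (\<Sum>u\<in>supp F. F u * (\<Sum>s\<in>S. L u s * K s w))"
    by (subst sum.swap) (simp add: sum_distrib_left mult.assoc)
  also have "\<dots> = (\<Sum>u\<in>supp F. F u * lin K (L u) w)"
    by (rule sum.cong[OF refl]) (subst lin_fin[OF fS], auto simp: S_def)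
  finally show "lin K (lin L F) w = lin (\<lambda>u. lin K (L u)) F w" by (simp add: lin_def)
qed

lemma lin_swap:
  "lin (\<lambda>u. lin (K u) G) F = lin (\<lambda>v. lin (\<lambda>u. K u v) F) G"
  unfolding lin_def
  by (rule ext) (simp add: sum_distrib_left sum.swap[of _ "supp F"] mult.left_commute)

lemma fsupp_add[simp]: "fsupp F \<Longrightarrow> fsupp G \<Longrightarrow> fsupp (\<lambda>w. F w + G w :: 'k::monoid_add)"
  unfolding fsupp_supp supp_def
  by (rule finite_subset[of _ "{w. F w \<noteq> 0} \<union> {w. G w \<noteq> 0}"]) auto
lemma fsupp_diff[simp]: "fsupp F \<Longrightarrow> fsupp G \<Longrightarrow> fsupp (\<lambda>w. F w - G w :: 'k::ab_group_add)"
  unfolding fsupp_supp supp_def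
  by (rule finite_subset[of _ "{w. F w \<noteq> 0} \<union> {w. G w \<noteq> 0}"]) auto
lemma fsupp_neg[simp]: "fsupp F \<Longrightarrow> fsupp (\<lambda>w. - F w :: 'k::ab_group_add)"
  unfolding fsupp_supp supp_def by simp
lemma fsupp_zero[simp]: "fsupp (\<lambda>w. 0)"
  unfolding fsupp_supp supp_def by simp

lemma lin_add: "fsupp F \<Longrightarrow> fsupp G \<Longrightarrow> lin K (\<lambda>w. F w + G w) = (\<lambda>w. lin K F w + lin K G w)"
proof (rule ext)
  fix w assume F: "fsupp F" and G: "fsupp G"
  let ?S = "supp F \<union> supp G"
  have f: "finite ?S" using F G by (simp add: fsupp_supp)
  have s: "supp (\<lambda>w. F w + G w) \<subseteq> ?S" by (auto simp: supp_def)
  show "lin K (\<lambda>w. F w + G w) w = lin K F w + lin K G w"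
    using f s by (simp add: lin_fin[OF f] sum.distrib distrib_right)
qed
lemma lin_diff: "fsupp F \<Longrightarrow> fsupp G \<Longrightarrow> lin K (\<lambda>w. F w - G w) = (\<lambda>w. lin K F w - lin K G w)"
proof (rule ext)
  fix w assume F: "fsupp F" and G: "fsupp G"
  let ?S = "supp F \<union> supp G"
  have f: "finite ?S" using F G by (simp add: fsupp_supp)
  have s: "supp (\<lambda>w. F w - G w) \<subseteq> ?S" by (auto simp: supp_def)
  show "lin K (\<lambda>w. F w - G w) w = lin K F w - lin K G w"
    using f s by (simp add: lin_fin[OF f] sum_subtractf left_diff_distrib)
qed
lemma lin_neg: "lin K (\<lambda>w. - F w) = (\<lambda>w. - lin K F w)"
  unfolding lin_def supp_def by (simp add: sum_negf)
lemma lin_zero[simp]: "lin K (\<lambda>w. 0) = (\<lambda>w. 0)"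
  unfolding lin_def supp_def by simp

lemma supp_tpre: "supp (tpre a F) = Cons a ` supp F"
  by (rule set_eqI) (case_tac x; auto simp: supp_def tpre_def)
lemma fsupp_tpre[simp]: "fsupp F \<Longrightarrow> fsupp (tpre a F)"
  by (simp add: fsupp_supp supp_tpre)
lemma tpre_single[simp]: "tpre a (wsingle u) = wsingle (a # u)"
  by (rule ext) (auto simp: tpre_def wsingle_def split: list.splits)
lemma tpre_add: "tpre a (\<lambda>w. F w + G w :: 'k::ab_group_add) = (\<lambda>w. tpre a F w + tpre a G w)"
  by (rule ext) (auto simp: tpre_def split: list.splits)
lemma tpre_diff: "tpre a (\<lambda>w. F w - G w :: 'k::ab_group_add) = (\<lambda>w. tpre a F w - tpre a G w)"
  by (rule ext) (auto simp: tpre_def split: list.splits)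
lemma tpre_neg: "tpre a (\<lambda>w. - F w :: 'k::ab_group_add) = (\<lambda>w. - tpre a F w)"
  by (rule ext) (auto simp: tpre_def split: list.splits)
lemma tpre_zero[simp]: "tpre a (\<lambda>w. 0) = (\<lambda>w. 0)"
  by (rule ext) (auto simp: tpre_def split: list.splits)
lemma lin_tpre_out: "lin (\<lambda>u. tpre a (K u)) F = tpre a (lin K F)"
  by (rule ext) (auto simp: tpre_def lin_def split: list.splits)
lemma lin_tpre_in: "lin K (tpre a F) = lin (\<lambda>u. K (a # u)) F"
proof -
  have "lin K (tpre a F) = (\<lambda>w. \<Sum>u\<in>Cons a ` supp F. tpre a F u * K u w)"
    by (simp add: lin_def supp_tpre)
  also have "\<dots> = lin (\<lambda>u. K (a # u)) F"
    by (rule ext) (simp add: sum.reindex lin_def tpre_def)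
  finally show ?thesis .
qed
lemma tpre_lin_single: "fsupp F \<Longrightarrow> tpre a F = lin (\<lambda>u. wsingle (a # u)) F"
  by (metis lin_tpre_in lin_wsingle fsupp_tpre)


lemma lsh_nil_r[simp]: "lsh U [] = wsingle U"
  by (cases U) auto

lemma fsupp_lsh[simp]: "fsupp (lsh U V :: _ \<Rightarrow> 'k::comm_ring_1)"
  by (induction U V rule: lsh.induct) auto

lemma lsh_comm: "lsh U V = lsh V U"
  by (induction U V rule: lsh.induct) (auto simp: mult.commute)

lemma lsh_one: "lsh (1 # U) V = tpre 1 (lsh U V)"
proof (induction V)
  case Nil then show ?case by simp
next
  case (Cons c Z)
  show ?case by (simp add: Cons tpre_add tpre_diff)
qed

lemma shuf_lin: "shuf F G = lin (\<lambda>u. lin (lsh u) G) F"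
  by (simp add: shuf_def bilext_lin)

lemma fsupp_shuf[simp]: "fsupp F \<Longrightarrow> fsupp G \<Longrightarrow> fsupp (shuf F G)"
  by (simp add: shuf_lin fsupp_lin)

lemma shuf_single[simp]: "shuf (wsingle u) (wsingle v) = lsh u v"
  by (simp add: shuf_lin)

lemma shuf_comm: "shuf F G = shuf G F"
  unfolding shuf_lin by (subst lin_swap) (simp add: lsh_comm)

lemma shuf_add1: "fsupp F \<Longrightarrow> fsupp G \<Longrightarrow> shuf (\<lambda>w. F w + G w) H = (\<lambda>w. shuf F H w + shuf G H w)"
  by (simp add: shuf_lin lin_add)
lemma shuf_diff1: "fsupp F \<Longrightarrow> fsupp G \<Longrightarrow> shuf (\<lambda>w. F w - G w) H = (\<lambda>w. shuf F H w - shuf G H w)"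
  by (simp add: shuf_lin lin_diff)
lemma shuf_add2: "fsupp F \<Longrightarrow> fsupp G \<Longrightarrow> shuf H (\<lambda>w. F w + G w) = (\<lambda>w. shuf H F w + shuf H G w)"
  by (simp add: shuf_lin lin_add lin_kadd)
lemma shuf_diff2: "fsupp F \<Longrightarrow> fsupp G \<Longrightarrow> shuf H (\<lambda>w. F w - G w) = (\<lambda>w. shuf H F w - shuf H G w)"
  by (simp add: shuf_lin lin_diff lin_kdiff)

lemma shuf_one1: "shuf (tpre 1 F) G = tpre 1 (shuf F G)"
proof -
  have "\<And>u. lin (lsh (1 # u)) G = tpre 1 (lin (lsh u) G)"
  proof -
    fix u :: "'a list"
    have e: "lsh (1 # u) = (\<lambda>v. tpre 1 (lsh u v))" by (rule ext) (simp add: lsh_one)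
    show "lin (lsh (1 # u)) G = tpre 1 (lin (lsh u) G)" unfolding e by (rule lin_tpre_out)
  qed
  then show ?thesis by (simp add: shuf_lin lin_tpre_in lin_tpre_out)
qed
lemma shuf_one2: "shuf G (tpre 1 F) = tpre 1 (shuf G F)"
  by (metis shuf_comm shuf_one1)

lemma shuf_tpre_tpre:
  assumes F: "fsupp F" and G: "fsupp G"
  shows "shuf (tpre a F) (tpre b G) = (\<lambda>w. tpre a (shuf F (tpre b G)) w + tpre b (shuf (tpre a F) G) w
          - tpre (a * b) (tpre 1 (shuf F G)) w)"
proof -
  have "shuf (tpre a F) (tpre b G) = lin (\<lambda>u. lin (\<lambda>v. lsh (a # u) (b # v)) G) F"
    by (simp add: shuf_lin lin_tpre_in)
  also have "\<dots> = lin (\<lambda>u w. lin (\<lambda>v. tpre a (lsh u (b # v))) G w + lin (\<lambda>v. tpre b (lsh (a # u) v)) G w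
          - lin (\<lambda>v. tpre (a * b) (tpre 1 (lsh u v))) G w) F"
    by (simp add: lin_kadd lin_kdiff)
  also have "\<dots> = (\<lambda>w. tpre a (shuf F (tpre b G)) w + tpre b (shuf (tpre a F) G) w
          - tpre (a * b) (tpre 1 (shuf F G)) w)"
    by (simp add: lin_kadd lin_kdiff lin_tpre_out shuf_lin lin_tpre_in)
  finally show ?thesis .
qed


lemma lsh_nil_fun: "lsh [] = wsingle"
  by (rule ext) simp
lemma lsh_nil_r_fun: "(\<lambda>u. lsh u []) = wsingle"
  by (rule ext) simp

lemma shuf_nil1[simp]: "fsupp G \<Longrightarrow> shuf (wsingle []) G = G"
  by (simp add: shuf_lin lsh_nil_fun lin_wsingle)
lemma shuf_nil2[simp]: "fsupp F \<Longrightarrow> shuf F (wsingle []) = F"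
  by (simp add: shuf_lin lsh_nil_r_fun lin_wsingle)

lemma lsh_assoc: "shuf (lsh U V) (wsingle W) = (shuf (wsingle U) (lsh V W) :: 'a::comm_ring_1 list \<Rightarrow> 'k::comm_ring_1)"
proof (induction "length U + length V + length W" arbitrary: U V W rule: less_induct)
  case less
  show ?case
  proof (cases "U = [] \<or> V = [] \<or> W = []")
    case True
    then show ?thesis by auto
  next
    case False
    then obtain a X b Y c Z where U: "U = a # X" and V: "V = b # Y" and W: "W = c # Z"
      by (meson neq_Nil_conv)
    note IH = less[unfolded U V W]
    define P1 :: "'a list \<Rightarrow> 'k" where "P1 = lsh X (b # Y)"
    define P2 :: "'a list \<Rightarrow> 'k" where "P2 = lsh (a # X) Y"
    define P3 :: "'a list \<Rightarrow> 'k" where "P3 = lsh X Y"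
    have fP: "fsupp P1" "fsupp P2" "fsupp P3" by (simp_all add: P1_def P2_def P3_def)
    have e1: "(lsh (a # X) (b # Y) :: 'a list \<Rightarrow> 'k) = (\<lambda>w. tpre a P1 w + tpre b P2 w - tpre (a * b) (tpre 1 P3) w)"
      by (simp add: P1_def P2_def P3_def)
    have Q2: "shuf (lsh (a # X) (b # Y)) (wsingle Z) = (\<lambda>w. shuf (tpre a P1) (wsingle Z) w
        + shuf (tpre b P2) (wsingle Z) w - shuf (tpre (a * b) (tpre 1 P3)) (wsingle Z) w)"
      unfolding e1 using fP by (simp add: shuf_add1 shuf_diff1)
    have L: "(shuf (lsh U V) (wsingle W) :: 'a list \<Rightarrow> 'k) = (\<lambda>w.
         tpre a (shuf (lsh X (b # Y)) (wsingle (c # Z))) w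
       + tpre c (shuf (lsh (a # X) (b # Y)) (wsingle Z)) w
       - tpre (a * c) (tpre 1 (shuf (lsh X (b # Y)) (wsingle Z))) w
       + tpre b (shuf (lsh (a # X) Y) (wsingle (c # Z))) w
       - tpre (b * c) (tpre 1 (shuf (lsh (a # X) Y) (wsingle Z))) w
       - tpre (a * b) (tpre 1 (shuf (lsh X Y) (wsingle (c # Z)))) w
       + tpre ((a * b) * c) (tpre 1 (tpre 1 (shuf (lsh X Y) (wsingle Z)))) w)"
    proof -
      have "(shuf (lsh U V) (wsingle W) :: 'a list \<Rightarrow> 'k) = shuf (lsh (a # X) (b # Y)) (tpre c (wsingle Z))"
        by (simp add: U V W)
      also have "\<dots> = (\<lambda>w. shuf (tpre a P1) (tpre c (wsingle Z)) w
        + shuf (tpre b P2) (tpre c (wsingle Z)) w - shuf (tpre (a * b) (tpre 1 P3)) (tpre c (wsingle Z)) w)"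
        unfolding e1 using fP by (simp add: shuf_add1 shuf_diff1 del: tpre_single)
      also have "\<dots> = (\<lambda>w.
         tpre a (shuf P1 (wsingle (c # Z))) w
       + tpre c (shuf (lsh (a # X) (b # Y)) (wsingle Z)) w
       - tpre (a * c) (tpre 1 (shuf P1 (wsingle Z))) w
       + tpre b (shuf P2 (wsingle (c # Z))) w
       - tpre (b * c) (tpre 1 (shuf P2 (wsingle Z))) w
       - tpre (a * b) (tpre 1 (shuf P3 (wsingle (c # Z)))) w
       + tpre ((a * b) * c) (tpre 1 (tpre 1 (shuf P3 (wsingle Z)))) w)"
        unfolding Q2 using fP
        by (simp add: shuf_tpre_tpre shuf_one1 tpre_add tpre_diff del: tpre_single) 
          (simp add: algebra_simps)
      finally show ?thesis unfolding P1_def P2_def P3_def .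
    qed
    define S1 :: "'a list \<Rightarrow> 'k" where "S1 = lsh Y (c # Z)"
    define S2 :: "'a list \<Rightarrow> 'k" where "S2 = lsh (b # Y) Z"
    define S3 :: "'a list \<Rightarrow> 'k" where "S3 = lsh Y Z"
    have fS: "fsupp S1" "fsupp S2" "fsupp S3" by (simp_all add: S1_def S2_def S3_def)
    have e2: "(lsh (b # Y) (c # Z) :: 'a list \<Rightarrow> 'k) = (\<lambda>w. tpre b S1 w + tpre c S2 w - tpre (b * c) (tpre 1 S3) w)"
      by (simp add: S1_def S2_def S3_def)
    have Q1: "(shuf (wsingle X) (lsh (b # Y) (c # Z)) :: 'a list \<Rightarrow> 'k) = (\<lambda>w. shuf (wsingle X) (tpre b S1) w
        + shuf (wsingle X) (tpre c S2) w - shuf (wsingle X) (tpre (b * c) (tpre 1 S3)) w)"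
      unfolding e2 using fS by (simp add: shuf_add2 shuf_diff2)
    have R: "(shuf (wsingle U) (lsh V W) :: 'a list \<Rightarrow> 'k) = (\<lambda>w.
         tpre a (shuf (wsingle X) (lsh (b # Y) (c # Z))) w
       + tpre b (shuf (tpre a (wsingle X)) (lsh Y (c # Z))) w
       + tpre c (shuf (tpre a (wsingle X)) (lsh (b # Y) Z)) w
       - tpre (a * b) (tpre 1 (shuf (wsingle X) (lsh Y (c # Z)))) w
       - tpre (a * c) (tpre 1 (shuf (wsingle X) (lsh (b # Y) Z))) w
       - tpre (b * c) (tpre 1 (shuf (tpre a (wsingle X)) (lsh Y Z))) w
       + tpre (a * (b * c)) (tpre 1 (tpre 1 (shuf (wsingle X) (lsh Y Z)))) w)"
    proof -
      have "(shuf (wsingle U) (lsh V W) :: 'a list \<Rightarrow> 'k) = shuf (tpre a (wsingle X)) (lsh (b # Y) (c # Z))"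
        by (simp add: U V W)
      also have "\<dots> = (\<lambda>w. shuf (tpre a (wsingle X)) (tpre b S1) w
        + shuf (tpre a (wsingle X)) (tpre c S2) w - shuf (tpre a (wsingle X)) (tpre (b * c) (tpre 1 S3)) w)"
        unfolding e2 using fS by (simp add: shuf_add2 shuf_diff2 del: tpre_single)
      also have "\<dots> = (\<lambda>w.
         tpre a (shuf (wsingle X) (lsh (b # Y) (c # Z))) w
       + tpre b (shuf (tpre a (wsingle X)) S1) w
       + tpre c (shuf (tpre a (wsingle X)) S2) w
       - tpre (a * b) (tpre 1 (shuf (wsingle X) S1)) w
       - tpre (a * c) (tpre 1 (shuf (wsingle X) S2)) w
       - tpre (b * c) (tpre 1 (shuf (tpre a (wsingle X)) S3)) w
       + tpre (a * (b * c)) (tpre 1 (tpre 1 (shuf (wsingle X) S3))) w)"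
        unfolding Q1 using fS
        by (simp add: shuf_tpre_tpre shuf_one2 tpre_add tpre_diff del: tpre_single) 
          (simp add: algebra_simps)
      finally show ?thesis unfolding S1_def S2_def S3_def .
    qed
    have i1: "(shuf (lsh X (b # Y)) (wsingle (c # Z)) :: 'a list \<Rightarrow> 'k) = shuf (wsingle X) (lsh (b # Y) (c # Z))"
      by (rule IH) auto
    have i2: "(shuf (lsh (a # X) (b # Y)) (wsingle Z) :: 'a list \<Rightarrow> 'k) = shuf (wsingle (a # X)) (lsh (b # Y) Z)"
      by (rule IH) auto
    have i3: "(shuf (lsh X (b # Y)) (wsingle Z) :: 'a list \<Rightarrow> 'k) = shuf (wsingle X) (lsh (b # Y) Z)"
      by (rule IH) auto
    have i4: "(shuf (lsh (a # X) Y) (wsingle (c # Z)) :: 'a list \<Rightarrow> 'k) = shuf (wsingle (a # X)) (lsh Y (c # Z))"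
      by (rule IH) auto
    have i5: "(shuf (lsh (a # X) Y) (wsingle Z) :: 'a list \<Rightarrow> 'k) = shuf (wsingle (a # X)) (lsh Y Z)"
      by (rule IH) auto
    have i6: "(shuf (lsh X Y) (wsingle (c # Z)) :: 'a list \<Rightarrow> 'k) = shuf (wsingle X) (lsh Y (c # Z))"
      by (rule IH) auto
    have i7: "(shuf (lsh X Y) (wsingle Z) :: 'a list \<Rightarrow> 'k) = shuf (wsingle X) (lsh Y Z)"
      by (rule IH) auto
    show ?thesis unfolding L R i1 i2 i3 i4 i5 i6 i7
      by (rule ext) (simp add: algebra_simps)
  qed
qed


lemma bar_lin: "bar X Y = lin (\<lambda>u. lin (barw u) Y) X"
  by (simp add: bar_def bilext_lin)

lemma barw_nil1[simp]: "barw [] v = (\<lambda>w. 0)" by simp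
lemma barw_nil2[simp]: "barw u [] = (\<lambda>w. 0)" by (cases u) auto
lemma barw_nil_fun[simp]: "barw [] = (\<lambda>v w. 0)" by (rule ext) simp

lemma fsupp_barw[simp]: "fsupp (barw u v :: _ \<Rightarrow> 'k::comm_ring_1)"
  by (cases u; cases v) auto

lemma fsupp_bar[simp]: "fsupp X \<Longrightarrow> fsupp Y \<Longrightarrow> fsupp (bar X Y)"
  by (simp add: bar_lin fsupp_lin)

lemma barw_comm: "barw u v = barw v u"
  by (cases u; cases v) (auto simp: lsh_comm mult.commute)

lemma bar_comm: "bar X Y = bar Y X"
  unfolding bar_lin by (subst lin_swap) (simp add: barw_comm)

lemma bar_single[simp]: "bar (wsingle u) (wsingle v) = barw u v"
  by (simp add: bar_lin)

lemma bar_zero1[simp]: "bar (\<lambda>w. 0) Y = (\<lambda>w. 0)" by (simp add: bar_lin)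
lemma bar_zero2[simp]: "bar X (\<lambda>w. 0) = (\<lambda>w. 0)" by (simp add: bar_lin lin_kzero)
lemma bar_nil1[simp]: "bar (wsingle []) Y = (\<lambda>w. 0)"
  by (simp add: bar_lin lin_kzero)
lemma bar_nil2[simp]: "bar Y (wsingle []) = (\<lambda>w. 0)"
  by (metis bar_comm bar_nil1)

lemma bar_tpre_tpre: "bar (tpre a F) (tpre b G) = tpre (a * b) (shuf F G)"
  by (simp add: bar_lin lin_tpre_in lin_tpre_out shuf_lin)

lemma bar_neg1: "bar (\<lambda>w. - F w) G = (\<lambda>w. - bar F G w)"
  by (simp add: bar_lin lin_neg)
lemma bar_neg2: "bar G (\<lambda>w. - F w) = (\<lambda>w. - bar G F w)"
  by (metis bar_comm bar_neg1)

lemma bar_lin_left: "fsupp X \<Longrightarrow> (\<And>u. fsupp (K u)) \<Longrightarrow> bar (lin K X) Y = lin (\<lambda>u. bar (K u) Y) X"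
  by (simp add: bar_lin lin_comp)

lemma bar_lin_right: "fsupp Y \<Longrightarrow> bar F Y = lin (\<lambda>v. bar F (wsingle v)) Y"
  unfolding bar_lin by (subst lin_swap) simp

lemma bar_assoc_words: "bar (barw u v) (wsingle z) = bar (wsingle u) (barw v z)"
proof (cases "u = [] \<or> v = [] \<or> z = []")
  case True then show ?thesis by auto
next
  case False
  then obtain a U b V c Z where e: "u = a # U" "v = b # V" "z = c # Z" by (meson neq_Nil_conv)
  have "bar (barw u v) (wsingle z) = bar (tpre (a * b) (lsh U V)) (tpre c (wsingle Z))"
    by (simp add: e)
  also have "\<dots> = tpre (a * (b * c)) (shuf (lsh U V) (wsingle Z))"
    by (simp only: bar_tpre_tpre mult.assoc)
  also have "\<dots> = tpre (a * (b * c)) (shuf (wsingle U) (lsh V Z))"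
    by (simp only: lsh_assoc)
  also have "\<dots> = bar (tpre a (wsingle U)) (tpre (b * c) (lsh V Z))"
    by (simp only: bar_tpre_tpre)
  also have "\<dots> = bar (wsingle u) (barw v z)"
    by (simp add: e)
  finally show ?thesis .
qed

lemma bar_assoc: "fsupp X \<Longrightarrow> fsupp Y \<Longrightarrow> fsupp Z \<Longrightarrow> bar (bar X Y) Z = bar X (bar Y Z)"
proof -
  assume X: "fsupp X" and Y: "fsupp Y" and Z: "fsupp Z"
  have "bar (bar X Y) Z = lin (\<lambda>u. lin (\<lambda>v. bar (barw u v) Z) Y) X"
    using X Y unfolding bar_lin by (simp add: lin_comp fsupp_lin)
  also have "\<dots> = lin (\<lambda>u. lin (\<lambda>v. lin (\<lambda>z. bar (wsingle u) (barw v z)) Z) Y) X"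
    using Z by (subst bar_lin_right) (simp_all add: bar_assoc_words)
  also have "\<dots> = bar X (bar Y Z)"
    using Y Z unfolding bar_lin by (simp add: lin_comp fsupp_lin)
  finally show ?thesis .
qed


lemma fsupp_PA[simp]: "fsupp X \<Longrightarrow> fsupp (PA X)" by (simp add: PA_def)

lemma tprec_lin: "tprec X Y = lin (\<lambda>u. lin (\<lambda>v. barw u (1 # v)) Y) X"
  by (simp add: tprec_def bar_lin PA_def lin_tpre_in)
lemma tsucc_lin: "tsucc X Y = lin (\<lambda>u. lin (\<lambda>v. barw (1 # u) v) Y) X"
  by (simp add: tsucc_def bar_lin PA_def lin_tpre_in)
lemma tbul_lin: "fsupp X \<Longrightarrow> fsupp Y \<Longrightarrow>
   tbul X Y = lin (\<lambda>u. lin (\<lambda>v w. - bar (barw u [1, 1]) (wsingle v) w) Y) X"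
proof -
  assume X: "fsupp X" and Y: "fsupp Y"
  have "bar X (PA (wsingle [1])) = lin (\<lambda>u. barw u [1, 1]) X"
    by (simp add: bar_lin PA_def)
  then have "bar (bar X (PA (wsingle [1]))) Y = lin (\<lambda>u. lin (\<lambda>v. bar (barw u [1, 1]) (wsingle v)) Y) X"
    using X Y by (simp add: bar_lin_left) (metis bar_lin_right)
  then show ?thesis by (simp add: tbul_def lin_kneg lin_neg)
qed

lemma tstar_lin: "fsupp X \<Longrightarrow> fsupp Y \<Longrightarrow>
   tstar X Y = lin (\<lambda>u. lin (\<lambda>v w. barw u (1 # v) w + barw (1 # u) v w - bar (barw u [1, 1]) (wsingle v) w) Y) X"
  unfolding tstar_def tprec_lin tsucc_lin
  by (simp add: tbul_lin) (rule ext, simp add: lin_def sum.distrib distrib_left sum_subtractf right_diff_distrib sum_negf)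

lemma lsh_single_one: "lsh U [1] = tpre 1 (wsingle U)"
  by (subst lsh_comm) (simp add: lsh_one)

lemma star_word: "u \<noteq> [] \<Longrightarrow> v \<noteq> [] \<Longrightarrow>
  (\<lambda>w. barw u (1 # v) w + barw (1 # u) v w - bar (barw u [1, 1]) (wsingle v) w) = (lsh u v :: 'a::comm_ring_1 list \<Rightarrow> 'k::comm_ring_1)"
proof -
  assume "u \<noteq> []" "v \<noteq> []"
  then obtain a U b V where e: "u = a # U" "v = b # V" by (meson neq_Nil_conv)
  have "(bar (barw u [1, 1]) (wsingle v) :: 'a list \<Rightarrow> 'k) = bar (tpre a (tpre 1 (wsingle U))) (tpre b (wsingle V))"
    by (simp add: e lsh_single_one del: tpre_single) simp
  also have "\<dots> = tpre (a * b) (tpre 1 (lsh U V))"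
    by (simp add: bar_tpre_tpre shuf_one1 del: tpre_single)
  finally show ?thesis by (simp add: e)
qed

lemma supp_tplus: "tplus X \<Longrightarrow> u \<in> supp X \<Longrightarrow> u \<noteq> []"
  by (auto simp: tplus_def supp_def)

lemma tstar_shuf: "tplus X \<Longrightarrow> tplus Y \<Longrightarrow> tstar X Y = shuf X Y"
proof -
  assume X: "tplus X" and Y: "tplus Y"
  then have "fsupp X" "fsupp Y" by (auto simp: tplus_def)
  then have "tstar X Y = lin (\<lambda>u. lin (\<lambda>v w. barw u (1 # v) w + barw (1 # u) v w - bar (barw u [1, 1]) (wsingle v) w) Y) X"
    by (rule tstar_lin)
  also have "\<dots> = lin (\<lambda>u. lin (lsh u) Y) X"
  proof (rule lin_cong)
    fix u assume u: "u \<in> supp X"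
    show "lin (\<lambda>v w. barw u (1 # v) w + barw (1 # u) v w - bar (barw u [1, 1]) (wsingle v) w) Y = lin (lsh u) Y"
      by (rule lin_cong) (use supp_tplus[OF X u] supp_tplus[OF Y] in \<open>simp add: star_word\<close>)
  qed
  finally show ?thesis by (simp add: shuf_lin)
qed

lemma RB: "tplus X \<Longrightarrow> tplus Y \<Longrightarrow> bar (PA X) (PA Y) = PA (tstar X Y)"
  by (simp add: tstar_shuf PA_def bar_tpre_tpre)


lemma bar_lcomm: "fsupp X \<Longrightarrow> fsupp Y \<Longrightarrow> fsupp Z \<Longrightarrow> bar X (bar Y Z) = bar Y (bar X Z)"
  by (metis bar_assoc bar_comm)

lemma tplus_fsupp: "tplus X \<Longrightarrow> fsupp X" by (simp add: tplus_def)

lemma tridend: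
  assumes X: "tplus X" and Y: "tplus Y" and Z: "tplus Z"
  shows
        "tprec (tprec X Y) Z = tprec X (tstar Y Z)"
        "tprec (tsucc X Y) Z = tsucc X (tprec Y Z)"
        "tsucc (tstar X Y) Z = tsucc X (tsucc Y Z)"
        "tbul (tsucc X Y) Z = tsucc X (tbul Y Z)"
        "tbul (tprec X Y) Z = tbul X (tsucc Y Z)"
        "tprec (tbul X Y) Z = tbul X (tprec Y Z)"
        "tbul (tbul X Y) Z = tbul X (tbul Y Z)"
        "tprec X Y = tsucc Y X"
        "tbul X Y = tbul Y X"
proof -
  have f: "fsupp X" "fsupp Y" "fsupp Z" using X Y Z by (simp_all add: tplus_fsupp)
  have c: "fsupp (PA (wsingle [1]) :: _ \<Rightarrow> 'b)" by simp
  note ac = bar_assoc bar_comm bar_lcomm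
  show "tprec (tprec X Y) Z = tprec X (tstar Y Z)"
    using f by (simp add: tprec_def bar_assoc RB[OF Y Z, symmetric])
  show "tprec (tsucc X Y) Z = tsucc X (tprec Y Z)"
    using f by (simp add: tprec_def tsucc_def bar_assoc)
  show "tsucc (tstar X Y) Z = tsucc X (tsucc Y Z)"
    using f by (simp add: tsucc_def bar_assoc RB[OF X Y, symmetric])
  show "tbul (tsucc X Y) Z = tsucc X (tbul Y Z)"
    using f by (simp add: tbul_def tsucc_def bar_neg1 bar_neg2 bar_assoc)
  show "tbul (tprec X Y) Z = tbul X (tsucc Y Z)"
    using f by (simp add: tbul_def tprec_def tsucc_def bar_neg1 bar_neg2 ac)
  show "tprec (tbul X Y) Z = tbul X (tprec Y Z)"
    using f by (simp add: tbul_def tprec_def bar_neg1 bar_neg2 bar_assoc)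
  show "tbul (tbul X Y) Z = tbul X (tbul Y Z)"
    using f by (simp add: tbul_def bar_neg1 bar_neg2 ac)
  show "tprec X Y = tsucc Y X"
    using f by (simp add: tprec_def tsucc_def bar_comm)
  show "tbul X Y = tbul Y X"
    using f by (simp add: tbul_def ac)
qed


lemma map_inv: "(\<And>a. d (d a) = a) \<Longrightarrow> map d (map d w) = w"
  by (induction w) auto

lemma map_inv2: "(\<And>a. d (d a) = a) \<Longrightarrow> map (d \<circ> d) w = w"
  by (induction w) auto

lemma tdag_zero[simp]: "tdag d (\<lambda>w. 0) = (\<lambda>w. 0)" by (simp add: tdag_def)
lemma tdag_neg[simp]: "tdag d (\<lambda>w. - F w) = (\<lambda>w. - tdag d F w)" by (simp add: tdag_def)

lemma tdag_tpre: "(\<And>a. d (d a) = a) \<Longrightarrow> tdag d (tpre a F) = tpre (d a) (tdag d F)"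
  unfolding tdag_def tpre_def
  by (rule ext) (auto split: list.splits; metis)

lemma tdag_single: "(\<And>a. d (d a) = a) \<Longrightarrow> tdag d (wsingle u) = wsingle (map d u)"
  unfolding tdag_def wsingle_def by (rule ext) (metis map_inv)

lemma tdag_lsh:
  assumes inv: "\<And>a. d (d a) = a" and mul: "\<And>a b. d (a * b) = d a * d b" and one: "d 1 = 1"
  shows "tdag d (lsh U V) = (lsh (map d U) (map d V) :: 'a::comm_ring_1 list \<Rightarrow> 'k::comm_ring_1)"
proof (induction U V rule: lsh.induct)
  case (1 V) then show ?case by (simp add: tdag_single inv)
next
  case (2 a U) then show ?case by (simp add: tdag_single inv)
next
  case (3 a U b V)
  have "tdag d (lsh (a # U) (b # V)) = (\<lambda>w. tdag d (tpre a (lsh U (b # V))) w + tdag d (tpre b (lsh (a # U) V)) w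
        - tdag d (tpre (a * b) (tpre 1 (lsh U V))) w :: 'k)"
    by (simp add: tdag_def)
  also have "\<dots> = lsh (map d (a # U)) (map d (b # V))"
    using 3 by (simp add: tdag_tpre inv mul one)
  finally show ?case .
qed

lemma supp_tdag: "(\<And>a. d (d a) = a) \<Longrightarrow> supp (tdag d F) = map d ` supp F"
  unfolding supp_def tdag_def by (auto simp: image_iff map_inv map_inv2) (metis map_inv)

lemma inj_map_inv: "(\<And>a. d (d a) = a) \<Longrightarrow> inj (map d)"
  by (metis injI map_inv)

lemma tdag_lin: "(\<And>a. d (d a) = a) \<Longrightarrow> tdag d (lin K F) = lin (\<lambda>u. tdag d (K (map d u))) (tdag d F)"
proof -
  assume inv: "\<And>a. d (d a) = a"
  show ?thesis
    unfolding lin_def supp_tdag[OF inv]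
    by (rule ext) (simp add: sum.reindex inj_on_subset[OF inj_map_inv[OF inv]] map_inv2[OF inv] tdag_def)
qed

lemma tdag_barw:
  assumes inv: "\<And>a. d (d a) = a" and mul: "\<And>a b. d (a * b) = d a * d b" and one: "d 1 = 1"
  shows "tdag d (barw (map d u) (map d v)) = barw u v"
  by (cases u; cases v) (simp_all add: tdag_tpre[OF inv] tdag_lsh[OF inv mul one] inv mul map_inv2[OF inv])

lemma tdag_bar:
  assumes inv: "\<And>a. d (d a) = a" and mul: "\<And>a b. d (a * b) = d a * d b" and one: "d 1 = 1"
  shows "tdag d (bar X Y) = bar (tdag d X) (tdag d Y)"
  unfolding bar_lin
  by (simp add: tdag_lin[OF inv] tdag_barw[OF inv mul one])

lemma tdag_PA: "(\<And>a. d (d a) = a) \<Longrightarrow> d 1 = 1 \<Longrightarrow> tdag d (PA X) = PA (tdag d X)"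
  by (simp add: PA_def tdag_tpre)

lemma tdag_ops:
  fixes X Y :: "'a::comm_ring_1 list \<Rightarrow> 'k::comm_ring_1"
  assumes inv: "\<And>a. d (d a) = a" and mul: "\<And>a b. d (a * b) = d a * d b" and one: "d 1 = 1"
  shows "tdag d (tprec X Y) = tprec (tdag d X) (tdag d Y)"
    "tdag d (tbul X Y) = tbul (tdag d X) (tdag d Y)"
proof -
  show "tdag d (tprec X Y) = tprec (tdag d X) (tdag d Y)"
    by (simp add: tprec_def tdag_bar[OF inv mul one] tdag_PA[OF inv one])
  have "tdag d (PA (wsingle [1])) = (PA (wsingle [1]) :: 'a list \<Rightarrow> 'k)"
    by (simp add: tdag_PA[OF inv one] tdag_single[OF inv] one)
  then show "tdag d (tbul X Y) = tbul (tdag d X) (tdag d Y)"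
    by (simp add: tbul_def tdag_bar[OF inv mul one])
qed


theorem corollary4p10:
  fixes scale :: "'k::field_char_0 \<Rightarrow> 'a::comm_ring_1 \<Rightarrow> 'a"
    and dag :: "'a \<Rightarrow> 'a"
  assumes mod: "Modules.module scale"
    and alg: "\<And>c a b. scale c (a * b) = scale c a * b"
    and dag_add: "\<And>a b. dag (a + b) = dag a + dag b"
    and dag_scale: "\<And>c a. dag (scale c a) = scale c (dag a)"
    and dag_inv: "\<And>a. dag (dag a) = a"
    and dag_mult: "\<And>a b. dag (a * b) = dag b * dag a"
  shows
    "\<forall>X Y Z :: 'a list \<Rightarrow> 'k. tplus X \<and> tplus Y \<and> tplus Z \<longrightarrow>
        teq scale (tprec (tprec X Y) Z) (tprec X (tstar Y Z))
      \<and> teq scale (tprec (tsucc X Y) Z) (tsucc X (tprec Y Z))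
      \<and> teq scale (tsucc (tstar X Y) Z) (tsucc X (tsucc Y Z))
      \<and> teq scale (tbul (tsucc X Y) Z) (tsucc X (tbul Y Z))
      \<and> teq scale (tbul (tprec X Y) Z) (tbul X (tsucc Y Z))
      \<and> teq scale (tprec (tbul X Y) Z) (tbul X (tprec Y Z))
      \<and> teq scale (tbul (tbul X Y) Z) (tbul X (tbul Y Z))
      \<and> teq scale (tprec X Y) (tsucc Y X)
      \<and> teq scale (tbul X Y) (tbul Y X)
      \<and> teq scale (tdag dag (tprec X Y)) (tprec (tdag dag X) (tdag dag Y))
      \<and> teq scale (tdag dag (tbul X Y)) (tbul (tdag dag X) (tdag dag Y))"
  proof (intro allI impI, elim conjE)
  fix X Y Z :: "'a list \<Rightarrow> 'k"
  assume X: "tplus X" and Y: "tplus Y" and Z: "tplus Z"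
  have one: "dag 1 = 1"
  proof -
    have "1 = dag (dag 1 * 1)" by (simp add: dag_inv)
    also have "\<dots> = dag 1" by (subst dag_mult) (simp add: dag_inv)
    finally show ?thesis by (rule sym)
  qed
  have mul: "\<And>a b. dag (a * b) = dag a * dag b"
    by (simp add: dag_mult mult.commute)
  have r: "\<And>A B. A = B \<Longrightarrow> teq scale A B"
    by (simp add: teq_def tnull.zero)
  show "teq scale (tprec (tprec X Y) Z) (tprec X (tstar Y Z))
      \<and> teq scale (tprec (tsucc X Y) Z) (tsucc X (tprec Y Z))
      \<and> teq scale (tsucc (tstar X Y) Z) (tsucc X (tsucc Y Z))
      \<and> teq scale (tbul (tsucc X Y) Z) (tsucc X (tbul Y Z))
      \<and> teq scale (tbul (tprec X Y) Z) (tbul X (tsucc Y Z))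
      \<and> teq scale (tprec (tbul X Y) Z) (tbul X (tprec Y Z))
      \<and> teq scale (tbul (tbul X Y) Z) (tbul X (tbul Y Z))
      \<and> teq scale (tprec X Y) (tsucc Y X)
      \<and> teq scale (tbul X Y) (tbul Y X)
      \<and> teq scale (tdag dag (tprec X Y)) (tprec (tdag dag X) (tdag dag Y))
      \<and> teq scale (tdag dag (tbul X Y)) (tbul (tdag dag X) (tdag dag Y))"
    using tridend[OF X Y Z] tdag_ops[OF dag_inv mul one, of X Y] by (simp add: r)
qed

end
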